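(* Let $S\subseteq M_n$ and $T\subseteq M_{n'}$ be noncommutative graphs. Then $\mathcal{H}(S\otimes T)\leq \mathcal{H}(S)\,\mathcal{H}(T)$.
   Context: All scalars are complex; $M_n$ denotes complex $n\times n$ matrices. A noncommutative graph is a linear subspace $S\subseteq M_n$ that contains $I_n$ and is closed under conjugate transpose. For subspaces $S\subseteq M_n$, $T\subseteq M_{n'}$, $S\otimes T=\mathrm{span}\{A\otimes B: A\in S, B\in T\}\subseteq M_{nn'}$ (Kronecker product). For a subspace $S\subseteq M_n$, $M_m(S)$ denotes the set of $m\times m$ block matrices $B=[B_{i,j}]_{i,j\in[m]}$ with every block $B_{i,j}\in S$, viewed as elements of $M_{mn}$. The Haemers bound of a noncommutative graph $S\subseteq M_n$ is $\mathcal{H}(S)=\min\{\mathrm{rk}(B):\ m\in\mathbb{N},\ B\in M_m(S),\ \sum_{i=1}^m B_{i,i}=I_n\}$. *)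

theory Defs
  imports "Jordan_Normal_Form.Schur_Decomposition" "Jordan_Normal_Form.DL_Rank"
begin

definition mat_subspace :: "nat \<Rightarrow> complex mat set \<Rightarrow> bool" where
  "mat_subspace n S \<longleftrightarrow> S \<subseteq> carrier_mat n n \<and> 0\<^sub>m n n \<in> S \<and>
     (\<forall>A\<in>S. \<forall>B\<in>S. A + B \<in> S) \<and> (\<forall>c::complex. \<forall>A\<in>S. c \<cdot>\<^sub>m A \<in> S)"

definition nc_graph :: "nat \<Rightarrow> complex mat set \<Rightarrow> bool" where
  "nc_graph n S \<longleftrightarrow> mat_subspace n S \<and> 1\<^sub>m n \<in> S \<and> (\<forall>A\<in>S. mat_adjoint A \<in> S)"

definition kron :: "complex mat \<Rightarrow> complex mat \<Rightarrow> complex mat" where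
  "kron A B = mat (dim_row A * dim_row B) (dim_col A * dim_col B)
     (\<lambda>(i, j). A $$ (i div dim_row B, j div dim_col B) * B $$ (i mod dim_row B, j mod dim_col B))"

inductive_set tensor_space :: "nat \<Rightarrow> nat \<Rightarrow> complex mat set \<Rightarrow> complex mat set \<Rightarrow> complex mat set"
  for n n' S T where
  zero: "0\<^sub>m (n * n') (n * n') \<in> tensor_space n n' S T"
| kron: "A \<in> S \<Longrightarrow> B \<in> T \<Longrightarrow> kron A B \<in> tensor_space n n' S T"
| add: "X \<in> tensor_space n n' S T \<Longrightarrow> Y \<in> tensor_space n n' S T \<Longrightarrow> X + Y \<in> tensor_space n n' S T"
| smult: "X \<in> tensor_space n n' S T \<Longrightarrow> c \<cdot>\<^sub>m X \<in> tensor_space n n' S T"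

definition block :: "nat \<Rightarrow> complex mat \<Rightarrow> nat \<Rightarrow> nat \<Rightarrow> complex mat" where
  "block n B i j = mat n n (\<lambda>(a, b). B $$ (i * n + a, j * n + b))"

definition block_mats :: "nat \<Rightarrow> nat \<Rightarrow> complex mat set \<Rightarrow> complex mat set" where
  "block_mats m n S = {B \<in> carrier_mat (m * n) (m * n). \<forall>i<m. \<forall>j<m. block n B i j \<in> S}"

definition diag_block_sum :: "nat \<Rightarrow> nat \<Rightarrow> complex mat \<Rightarrow> complex mat" where
  "diag_block_sum m n B = mat n n (\<lambda>(a, b). \<Sum>i<m. B $$ (i * n + a, i * n + b))"

definition haemers :: "nat \<Rightarrow> complex mat set \<Rightarrow> nat" where
  "haemers n S = (LEAST r. \<exists>m B. B \<in> block_mats m n S \<and> diag_block_sum m n B = 1\<^sub>m n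
        \<and> r = vec_space.rank (m * n) B)"

end

theory Submission
  imports Defs
begin


lemma rank_decomp:
  fixes A :: "complex mat"
  assumes A: "A \<in> carrier_mat M K"
  shows "\<exists>f g. \<forall>x<M. \<forall>y<K. A $$ (x,y) = (\<Sum>s<vec_space.rank M A. f s x * g s y)"
proof -
  interpret vs: vec_space "TYPE(complex)" M .
  obtain U where max: "maximal U (\<lambda>T. T \<subseteq> set (cols A) \<and> vs.lin_indpt T)"
    using maximal_exists[of "(\<lambda>T. T \<subseteq> set (cols A) \<and> vs.lin_indpt T)" "card (set (cols A))" "{}"]
    by (meson List.finite_set card_mono empty_iff empty_subsetI vs.finite_lin_indpt2 rev_finite_subset)
  have rk: "vs.rank A = card U" using vs.rank_card_indpt[OF A max] .
  have Usub: "U \<subseteq> set (cols A)" and Uind: "vs.lin_indpt U" using max unfolding maximal_def by auto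
  have colsC: "set (cols A) \<subseteq> carrier_vec M" using A cols_dim by blast
  have UC: "U \<subseteq> carrier_vec M" using Usub colsC by blast
  have inspan: "v \<in> vs.span U" if v: "v \<in> set (cols A)" for v
  proof (cases "v \<in> U")
    case True then show ?thesis using UC vs.span_mem by blast
  next
    case False
    have "\<not> vs.lin_indpt (U \<union> {v})"
    proof
      assume "vs.lin_indpt (U \<union> {v})"
      then have "U \<union> {v} = U" using max v unfolding maximal_def
        by (metis Usub Un_upper1 Un_insert_right empty_subsetI insert_subset sup_bot_right)
      then show False using False by auto
    qed
    then show ?thesis using vs.lin_dep_iff_in_span[OF _ Uind _ False] UC v colsC by auto
  qed
  have finU: "finite U" using Usub finite_subset by blast
  obtain ws where ws: "set ws = U" "distinct ws" using finite_distinct_list[OF finU] by blast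
  have lw: "length ws = card U" using ws distinct_card by fastforce
  have wsC: "set ws \<subseteq> carrier_vec M" using ws UC by simp
  have "\<forall>y<K. \<exists>c. col A y = vs.lincomb_list c ws"
  proof (intro allI impI)
    fix y assume "y < K"
    then have "col A y \<in> set (cols A)" using A by (simp add: cols_def)
    then have "col A y \<in> vs.span_list ws" using inspan vs.span_list_as_span[OF wsC] ws by simp
    then show "\<exists>c. col A y = vs.lincomb_list c ws" by (metis vs.in_span_listE)
  qed
  then obtain cf where cf: "\<And>y. y < K \<Longrightarrow> col A y = vs.lincomb_list (cf y) ws" by metis
  show ?thesis
  proof (intro exI allI impI)
    fix x y assume x: "x < M" and y: "y < K"
    have "A $$ (x,y) = col A y $ x" using A x y by simp
    also have "\<dots> = (mat_of_cols M ws *\<^sub>v vec (length ws) (cf y)) $ x"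
      using cf[OF y] vs.lincomb_list_as_mat_mult wsC by (metis carrier_vecD subsetD)
    also have "\<dots> = (\<Sum>s<length ws. (ws ! s) $ x * cf y s)"
      using x by (simp add: mult_mat_vec_def scalar_prod_def row_def mat_of_cols_def lessThan_atLeast0)
    finally show "A $$ (x,y) = (\<Sum>s<vs.rank A. (\<lambda>s x. (ws ! s) $ x) s x * (\<lambda>s y. cf y s) s y)"
      using lw rk by simp
  qed
qed


lemma rank_sum_rank1:
  fixes f g :: "'i \<Rightarrow> nat \<Rightarrow> complex"
  assumes "finite I"
  shows "vec_space.rank N (mat N K (\<lambda>(x,y). \<Sum>s\<in>I. f s x * g s y)) \<le> card I"
  using assms
proof (induction I rule: finite_induct)
  case empty
  have "mat N K (\<lambda>(x,y). \<Sum>s\<in>{}. f s x * g s y) = (0\<^sub>m N K :: complex mat)"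
    by (rule eq_matI) simp_all
  then have "vec_space.rank N (mat N K (\<lambda>(x,y). \<Sum>s\<in>{}. f s x * g s y)) = 0"
    by (subst \<open>mat N K _ = _\<close>) (rule vec_space.rank_0I)
  then show ?case unfolding card.empty by (rule eq_imp_le)
next
  case (insert a I)
  let ?E = "mat N K (\<lambda>(x,y). \<Sum>s\<in>I. f s x * g s y)"
  let ?F = "mat N K (\<lambda>(x,y). f a x * g a y) :: complex mat"
  have eq: "mat N K (\<lambda>(x,y). \<Sum>s\<in>insert a I. f s x * g s y) = ?F + ?E"
    by (rule eq_matI) (use insert in simp_all)
  have "vec_space.rank N ?F \<le> 1"
    by (rule vec_space.rank_le_1_product_entries[of _ _ K "f a" "g a"]) simp_all
  moreover have "vec_space.rank N (?F + ?E) \<le> vec_space.rank N ?F + vec_space.rank N ?E"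
    by (rule vec_space.rank_subadditive[where nc=K]) simp_all
  ultimately show ?case using insert eq by simp
qed


lemma sum_div_mod:
  fixes h :: "nat \<Rightarrow> nat \<Rightarrow> 'a::comm_monoid_add"
  shows "(\<Sum>p<m*m'. h (p div m') (p mod m')) = (\<Sum>i<m. \<Sum>k<m'. h i k)"
proof (induction m)
  case 0 then show ?case by simp
next
  case (Suc m)
  have "(\<Sum>p<Suc m*m'. h (p div m') (p mod m')) = (\<Sum>p<m*m'. h (p div m') (p mod m')) + (\<Sum>p\<in>{m*m'..<m*m'+m'}. h (p div m') (p mod m'))"
    by (simp add: sum.atLeastLessThan_concat[symmetric] lessThan_atLeast0 add.commute)
  also have "(\<Sum>p\<in>{m*m'..<m*m'+m'}. h (p div m') (p mod m')) = (\<Sum>k<m'. h m k)"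
  proof -
    have "(\<Sum>p\<in>{m*m'..<m*m'+m'}. h (p div m') (p mod m')) = (\<Sum>k\<in>{0..<m'}. h ((k + m*m') div m') ((k+m*m') mod m'))"
      using sum.shift_bounds_nat_ivl[of "\<lambda>p. h (p div m') (p mod m')" 0 "m*m'" m'] by (simp add: add.commute)
    also have "\<dots> = (\<Sum>k<m'. h m k)"
    proof (intro sum.cong)
      fix k assume "k \<in> {..<m'}"
      then have "k < m'" by simp
      then show "h ((k + m*m') div m') ((k+m*m') mod m') = h m k" by simp
    qed (simp add: lessThan_atLeast0)
    finally show ?thesis .
  qed
  finally show ?case using Suc.IH by (simp add: add.commute)
qed

lemma idx_lt:
  fixes i a m n :: nat
  assumes "i < m" "a < n"
  shows "i * n + a < m * n"
proof -
  have "(i + 1) * n \<le> m * n" using assms(1) by (intro mult_right_mono) auto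
  then show ?thesis using assms(2) by simp
qed

lemma haemers_witness:
  assumes "nc_graph n S"
  shows "\<exists>m B. B \<in> block_mats m n S \<and> diag_block_sum m n B = 1\<^sub>m n \<and>
           haemers n S = vec_space.rank (m * n) B"
proof -
  let ?P = "\<lambda>r. \<exists>m B. B \<in> block_mats m n S \<and> diag_block_sum m n B = 1\<^sub>m n
        \<and> r = vec_space.rank (m * n) B"
  have I: "1\<^sub>m n \<in> S" using assms unfolding nc_graph_def by simp
  have b: "block n (1\<^sub>m n) 0 0 = 1\<^sub>m n"
    by (rule eq_matI) (simp_all add: block_def)
  have "1\<^sub>m n \<in> block_mats 1 n S" using I b by (simp add: block_mats_def)
  moreover have "diag_block_sum 1 n (1\<^sub>m n) = 1\<^sub>m n"
    by (rule eq_matI) (simp_all add: diag_block_sum_def)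
  ultimately have "?P (vec_space.rank (1 * n) (1\<^sub>m n :: complex mat))"
    by (intro exI[where x=1] exI[where x="1\<^sub>m n"]) simp
  then have "?P (haemers n S)" unfolding haemers_def by (rule LeastI)
  then show ?thesis by blast
qed

lemma diag_entry:
  assumes "diag_block_sum m n B = 1\<^sub>m n" "a < n" "b < n"
  shows "(\<Sum>i<m. B $$ (i * n + a, i * n + b)) = (if a = b then 1 else 0)"
proof -
  have "diag_block_sum m n B $$ (a,b) = 1\<^sub>m n $$ (a,b)" using assms(1) by simp
  then show ?thesis using assms(2,3) by (simp add: diag_block_sum_def)
qed

theorem mainTheorem2:
  fixes S T :: "complex mat set" and n n' :: nat
  assumes "nc_graph n S" and "nc_graph n' T"
  shows "haemers (n * n') (tensor_space n n' S T) \<le> haemers n S * haemers n' T"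
proof -
  obtain m B where B: "B \<in> block_mats m n S" "diag_block_sum m n B = 1\<^sub>m n"
     and hB: "haemers n S = vec_space.rank (m * n) B"
    using haemers_witness[OF assms(1)] by blast
  obtain m' C where C: "C \<in> block_mats m' n' T" "diag_block_sum m' n' C = 1\<^sub>m n'"
     and hC: "haemers n' T = vec_space.rank (m' * n') C"
    using haemers_witness[OF assms(2)] by blast
  have Bc: "B \<in> carrier_mat (m*n) (m*n)" and Cc: "C \<in> carrier_mat (m'*n') (m'*n')"
    using B C by (auto simp: block_mats_def)
  define N where "N = (m * m') * (n * n')"
  define \<alpha> where "\<alpha> R = (R div (n*n') div m') * n + (R mod (n*n')) div n'" for R
  define \<beta> where "\<beta> R = (R div (n*n') mod m') * n' + (R mod (n*n')) mod n'" for R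
  define D where "D = mat N N (\<lambda>(R,R'). B $$ (\<alpha> R, \<alpha> R') * C $$ (\<beta> R, \<beta> R'))"
  have Dc: "D \<in> carrier_mat N N" unfolding D_def by simp
  have \<alpha>lt: "\<alpha> R < m * n" if "R < N" for R
  proof -
    have "R div (n*n') < m * m'" using that unfolding N_def by (simp add: less_mult_imp_div_less)
    then have "R div (n*n') div m' < m" by (simp add: less_mult_imp_div_less)
    moreover have "R mod (n*n') < n * n'" using that unfolding N_def
      by (metis mod_less_divisor mult_eq_0_iff not_gr_zero not_less_zero)
    then have "(R mod (n*n')) div n' < n" by (simp add: less_mult_imp_div_less)
    ultimately show ?thesis unfolding \<alpha>_def by (rule idx_lt)
  qed
  have \<beta>lt: "\<beta> R < m' * n'" if "R < N" for R
  proof -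
    have "R div (n*n') < m * m'" using that unfolding N_def by (simp add: less_mult_imp_div_less)
    then have m'pos: "m' > 0" by (metis mult_0_right not_less_zero neq0_conv)
    then have "R div (n*n') mod m' < m'" by simp
    moreover have "R mod (n*n') < n * n'" using that unfolding N_def
      by (metis mod_less_divisor mult_eq_0_iff not_gr_zero not_less_zero)
    then have "n' > 0" by (metis mult_0_right not_less_zero neq0_conv)
    then have "(R mod (n*n')) mod n' < n'" by simp
    ultimately show ?thesis unfolding \<beta>_def by (rule idx_lt)
  qed
  have pq: "(p * (n*n') + q) div (n*n') = p" "(p * (n*n') + q) mod (n*n') = q"
    if "q < n * n'" for p q using that
    by (metis add.commute add_0 div_less div_mult_self1 less_nat_zero_code, simp)
  have blocks: "block (n*n') D p p' \<in> tensor_space n n' S T" if p: "p < m*m'" "p' < m*m'" for p p'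
  proof -
    let ?i = "p div m'" and ?j = "p' div m'" and ?k = "p mod m'" and ?l = "p' mod m'"
    have ij: "?i < m" "?j < m" using p by (simp_all add: less_mult_imp_div_less)
    have m'pos: "m' > 0" using p by (metis mult_0_right not_less_zero neq0_conv)
    have kl: "?k < m'" "?l < m'" using m'pos by simp_all
    have "block (n*n') D p p' = kron (block n B ?i ?j) (block n' C ?k ?l)"
    proof (rule eq_matI)
      fix q q' assume q: "q < dim_row (kron (block n B ?i ?j) (block n' C ?k ?l))"
        and q': "q' < dim_col (kron (block n B ?i ?j) (block n' C ?k ?l))"
      have q1: "q < n * n'" and q1': "q' < n * n'" using q q' by (simp_all add: kron_def block_def)
      have n'pos: "n' > 0" using q1 by (metis mult_0_right not_less_zero neq0_conv)
      have ab: "q div n' < n" "q' div n' < n" using q1 q1' by (simp_all add: less_mult_imp_div_less)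
      have cd: "q mod n' < n'" "q' mod n' < n'" using n'pos by simp_all
      have R: "p * (n*n') + q < N" "p' * (n*n') + q' < N"
        unfolding N_def using idx_lt[OF p(1) q1] idx_lt[OF p(2) q1'] by simp_all
      have "block (n*n') D p p' $$ (q,q') = D $$ (p * (n*n') + q, p' * (n*n') + q')"
        using q1 q1' by (simp add: block_def)
      also have "\<dots> = B $$ (?i * n + q div n', ?j * n + q' div n') * C $$ (?k * n' + q mod n', ?l * n' + q' mod n')"
        using R unfolding D_def by (simp add: \<alpha>_def \<beta>_def pq[OF q1] pq[OF q1'] q1 q1')
      also have "\<dots> = kron (block n B ?i ?j) (block n' C ?k ?l) $$ (q,q')"
        using q1 q1' ab cd by (simp add: kron_def block_def)
      finally show "block (n*n') D p p' $$ (q,q') = kron (block n B ?i ?j) (block n' C ?k ?l) $$ (q,q')" .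
    qed (simp_all add: kron_def block_def)
    moreover have "block n B ?i ?j \<in> S" using B(1) ij by (simp add: block_mats_def)
    moreover have "block n' C ?k ?l \<in> T" using C(1) kl by (simp add: block_mats_def)
    ultimately show ?thesis by (simp add: tensor_space.kron)
  qed
  have Dblk: "D \<in> block_mats (m*m') (n*n') (tensor_space n n' S T)"
    using Dc blocks unfolding block_mats_def N_def by simp
  have Ddiag: "diag_block_sum (m*m') (n*n') D = 1\<^sub>m (n*n')"
  proof (rule eq_matI)
    fix q q' assume q: "q < dim_row (1\<^sub>m (n*n') :: complex mat)" and q': "q' < dim_col (1\<^sub>m (n*n') :: complex mat)"
    have q1: "q < n * n'" and q1': "q' < n * n'" using q q' by simp_all
    have n'pos: "n' > 0" using q1 by (metis mult_0_right not_less_zero neq0_conv)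
    have ab: "q div n' < n" "q' div n' < n" using q1 q1' by (simp_all add: less_mult_imp_div_less)
    have cd: "q mod n' < n'" "q' mod n' < n'" using n'pos by simp_all
    have "diag_block_sum (m*m') (n*n') D $$ (q,q') = (\<Sum>p<m*m'. D $$ (p * (n*n') + q, p * (n*n') + q'))"
      using q1 q1' by (simp add: diag_block_sum_def)
    also have "\<dots> = (\<Sum>p<m*m'. B $$ ((p div m') * n + q div n', (p div m') * n + q' div n') *
                                C $$ ((p mod m') * n' + q mod n', (p mod m') * n' + q' mod n'))"
    proof (rule sum.cong)
      fix p assume "p \<in> {..<m*m'}"
      then have p: "p < m * m'" by simp
      have R: "p * (n*n') + q < N" "p * (n*n') + q' < N"
        unfolding N_def using idx_lt[OF p q1] idx_lt[OF p q1'] by simp_all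
      show "D $$ (p * (n*n') + q, p * (n*n') + q') = B $$ ((p div m') * n + q div n', (p div m') * n + q' div n') *
                                C $$ ((p mod m') * n' + q mod n', (p mod m') * n' + q' mod n')"
        using R unfolding D_def by (simp add: \<alpha>_def \<beta>_def pq[OF q1] pq[OF q1'] q1 q1')
    qed simp
    also have "\<dots> = (\<Sum>i<m. \<Sum>k<m'. B $$ (i * n + q div n', i * n + q' div n') *
                                C $$ (k * n' + q mod n', k * n' + q' mod n'))"
      by (rule sum_div_mod)
    also have "\<dots> = (\<Sum>i<m. B $$ (i * n + q div n', i * n + q' div n')) *
                     (\<Sum>k<m'. C $$ (k * n' + q mod n', k * n' + q' mod n'))"
      by (simp add: sum_product)
    also have "\<dots> = (if q div n' = q' div n' then 1 else 0) * (if q mod n' = q' mod n' then 1 else 0)"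
      using diag_entry[OF B(2) ab] diag_entry[OF C(2) cd] by simp
    also have "\<dots> = (if q = q' then 1 else 0)"
    proof -
      have "q = q' \<longleftrightarrow> q div n' = q' div n' \<and> q mod n' = q' mod n'"
        by (metis div_mult_mod_eq)
      then show ?thesis by simp
    qed
    also have "\<dots> = 1\<^sub>m (n*n') $$ (q,q')" using q1 q1' by simp
    finally show "diag_block_sum (m*m') (n*n') D $$ (q,q') = 1\<^sub>m (n*n') $$ (q,q')" .
  qed (simp_all add: diag_block_sum_def)
  have hD: "haemers (n * n') (tensor_space n n' S T) \<le> vec_space.rank N D"
    unfolding haemers_def N_def using Dblk Ddiag by (intro Least_le) blast
  obtain fB gB where fgB: "\<And>x y. x < m*n \<Longrightarrow> y < m*n \<Longrightarrow>
      B $$ (x,y) = (\<Sum>s<vec_space.rank (m*n) B. fB s x * gB s y)"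
    using rank_decomp[OF Bc] by blast
  obtain fC gC where fgC: "\<And>x y. x < m'*n' \<Longrightarrow> y < m'*n' \<Longrightarrow>
      C $$ (x,y) = (\<Sum>t<vec_space.rank (m'*n') C. fC t x * gC t y)"
    using rank_decomp[OF Cc] by blast
  let ?rB = "vec_space.rank (m*n) B" and ?rC = "vec_space.rank (m'*n') C"
  let ?I = "{..<?rB} \<times> {..<?rC}"
  define F where "F st R = fB (fst st) (\<alpha> R) * fC (snd st) (\<beta> R)" for st R
  define G where "G st R = gB (fst st) (\<alpha> R) * gC (snd st) (\<beta> R)" for st R
  have "D = mat N N (\<lambda>(x,y). \<Sum>st\<in>?I. F st x * G st y)"
  proof (rule eq_matI)
    fix x y assume x: "x < dim_row (mat N N (\<lambda>(x,y). \<Sum>st\<in>?I. F st x * G st y))"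
      and y: "y < dim_col (mat N N (\<lambda>(x,y). \<Sum>st\<in>?I. F st x * G st y))"
    have x1: "x < N" and y1: "y < N" using x y by simp_all
    have "D $$ (x,y) = B $$ (\<alpha> x, \<alpha> y) * C $$ (\<beta> x, \<beta> y)" using x1 y1 by (simp add: D_def)
    also have "\<dots> = (\<Sum>s<?rB. fB s (\<alpha> x) * gB s (\<alpha> y)) * (\<Sum>t<?rC. fC t (\<beta> x) * gC t (\<beta> y))"
      using fgB[OF \<alpha>lt[OF x1] \<alpha>lt[OF y1]] fgC[OF \<beta>lt[OF x1] \<beta>lt[OF y1]] by simp
    also have "\<dots> = (\<Sum>s<?rB. \<Sum>t<?rC. (fB s (\<alpha> x) * gB s (\<alpha> y)) * (fC t (\<beta> x) * gC t (\<beta> y)))"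
      by (rule sum_product)
    also have "\<dots> = (\<Sum>st\<in>?I. (fB (fst st) (\<alpha> x) * gB (fst st) (\<alpha> y)) * (fC (snd st) (\<beta> x) * gC (snd st) (\<beta> y)))"
      by (subst sum.cartesian_product) (simp add: split_def)
    also have "\<dots> = (\<Sum>st\<in>?I. F st x * G st y)"
      unfolding F_def G_def by (simp add: ac_simps)
    also have "\<dots> = mat N N (\<lambda>(x,y). \<Sum>st\<in>?I. F st x * G st y) $$ (x,y)" using x1 y1 by simp
    finally show "D $$ (x,y) = mat N N (\<lambda>(x,y). \<Sum>st\<in>?I. F st x * G st y) $$ (x,y)" .
  qed (simp_all add: D_def)
  then have "vec_space.rank N D \<le> card ?I"
    using rank_sum_rank1[of ?I N N F G] by simp
  also have "card ?I = ?rB * ?rC" by (simp add: card_cartesian_product)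
  finally show ?thesis using hD hB hC by simp
qed

end
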